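(* Let $(A,\dashv,\perp,\vdash,\varepsilon)$ be an associative color trialgebra. Then $A$ is a ternary Leibniz color algebra with respect to the bracket $$[x,y,z]:=x\dashv\big(y\perp z-\varepsilon(y,z)\,z\perp y\big)-\varepsilon(x,y+z)\big(y\perp z-\varepsilon(y,z)\,z\perp y\big)\vdash x$$ for all $x,y,z\in\mathcal{H}(A)$.
   Context: $G$ is an abelian group, $\mathbb{K}$ a field of characteristic $\neq 2$, $\mathcal{H}(V)$ the homogeneous elements of a $G$-graded space $V$; even maps preserve degree. A skew-symmetric bicharacter $\varepsilon:G\times G\to\mathbb{K}^*$ satisfies $\varepsilon(a,b)\varepsilon(b,a)=1$, $\varepsilon(a,b+c)=\varepsilon(a,b)\varepsilon(a,c)$, $\varepsilon(a+b,c)=\varepsilon(a,c)\varepsilon(b,c)$; $\varepsilon(x,y)$ means $\varepsilon$ of the degrees. An associative color trialgebra is a $G$-graded space $A$ with such $\varepsilon$ and three even bilinear associative operations $\dashv,\perp,\vdash$ satisfying, for all homogeneous $x,y,z$: $(x\dashv y)\dashv z=x\dashv(y\vdash z)=x\dashv(y\perp z)$; $(x\vdash y)\dashv z=x\vdash(y\dashv z)$; $(x\dashv y)\vdash z=x\vdash(y\vdash z)=(x\perp y)\vdash z$; $(x\perp y)\dashv z=x\perp(y\dashv z)$; $(x\dashv y)\perp z=x\perp(y\vdash z)$; $(x\vdash y)\perp z=x\vdash(y\perp z)$. A ternary Leibniz color algebra is a $G$-graded space with such $\varepsilon$ and an even trilinear $[-,-,-]$ satisfying $[[x,y,z],t,u]=[x,y,[z,t,u]]+\varepsilon(z,t+u)[x,[y,t,u],z]+\varepsilon(y+z,t+u)[[x,t,u],y,z]$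 for all homogeneous $x,y,z,t,u$. *)

theory Defs
  imports Complex_Main
begin

definition graded_space ::
  "('k::field \<Rightarrow> 'v::ab_group_add \<Rightarrow> 'v) \<Rightarrow> ('g::ab_group_add \<Rightarrow> 'v set) \<Rightarrow> bool" where
  "graded_space scale V \<longleftrightarrow>
     module scale \<and>
     (\<forall>g. module.subspace scale (V g)) \<and>
     (\<forall>v. \<exists>!c. (\<forall>g. c g \<in> V g) \<and> finite {g. c g \<noteq> 0} \<and>
                v = (\<Sum>g\<in>{g. c g \<noteq> 0}. c g))"

definition skew_bicharacter :: "('g::ab_group_add \<Rightarrow> 'g \<Rightarrow> 'k::field) \<Rightarrow> bool" where
  "skew_bicharacter eps \<longleftrightarrow>
     (\<forall>a b. eps a b \<noteq> 0) \<and>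
     (\<forall>a b. eps a b * eps b a = 1) \<and>
     (\<forall>a b c. eps a (b + c) = eps a b * eps a c) \<and>
     (\<forall>a b c. eps (a + b) c = eps a c * eps b c)"

definition even_bilinear ::
  "('k::field \<Rightarrow> 'v::ab_group_add \<Rightarrow> 'v) \<Rightarrow> ('g::ab_group_add \<Rightarrow> 'v set) \<Rightarrow> ('v \<Rightarrow> 'v \<Rightarrow> 'v) \<Rightarrow> bool" where
  "even_bilinear scale V f \<longleftrightarrow>
     (\<forall>x y z. f (x + y) z = f x z + f y z) \<and>
     (\<forall>x y z. f x (y + z) = f x y + f x z) \<and>
     (\<forall>k x y. f (scale k x) y = scale k (f x y)) \<and>
     (\<forall>k x y. f x (scale k y) = scale k (f x y)) \<and>
     (\<forall>a b x y. x \<in> V a \<longrightarrow> y \<in> V b \<longrightarrow> f x y \<in> V (a + b))"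

definition even_trilinear ::
  "('k::field \<Rightarrow> 'v::ab_group_add \<Rightarrow> 'v) \<Rightarrow> ('g::ab_group_add \<Rightarrow> 'v set) \<Rightarrow> ('v \<Rightarrow> 'v \<Rightarrow> 'v \<Rightarrow> 'v) \<Rightarrow> bool" where
  "even_trilinear scale V T \<longleftrightarrow>
     (\<forall>x x' y z. T (x + x') y z = T x y z + T x' y z) \<and>
     (\<forall>x y y' z. T x (y + y') z = T x y z + T x y' z) \<and>
     (\<forall>x y z z'. T x y (z + z') = T x y z + T x y z') \<and>
     (\<forall>k x y z. T (scale k x) y z = scale k (T x y z)) \<and>
     (\<forall>k x y z. T x (scale k y) z = scale k (T x y z)) \<and>
     (\<forall>k x y z. T x y (scale k z) = scale k (T x y z)) \<and>
     (\<forall>a b c x y z. x \<in> V a \<longrightarrow> y \<in> V b \<longrightarrow> z \<in> V c \<longrightarrow> T x y z \<in> V (a + b + c))"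

text \<open>Associative color trialgebra \<open>(A, \<dashv>, \<perp>, \<turnstile>, \<epsilon>)\<close>; here \<open>l\<close> is \<open>\<dashv>\<close>,
  \<open>p\<close> is \<open>\<perp>\<close> and \<open>r\<close> is \<open>\<turnstile>\<close>.\<close>

definition assoc_color_trialgebra ::
  "('k::field \<Rightarrow> 'v::ab_group_add \<Rightarrow> 'v) \<Rightarrow> ('g::ab_group_add \<Rightarrow> 'v set) \<Rightarrow> ('g \<Rightarrow> 'g \<Rightarrow> 'k)
   \<Rightarrow> ('v \<Rightarrow> 'v \<Rightarrow> 'v) \<Rightarrow> ('v \<Rightarrow> 'v \<Rightarrow> 'v) \<Rightarrow> ('v \<Rightarrow> 'v \<Rightarrow> 'v) \<Rightarrow> bool" where
  "assoc_color_trialgebra scale V eps l p r \<longleftrightarrow>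
     graded_space scale V \<and> skew_bicharacter eps \<and>
     even_bilinear scale V l \<and> even_bilinear scale V p \<and> even_bilinear scale V r \<and>
     (\<forall>x y z. l (l x y) z = l x (l y z)) \<and>
     (\<forall>x y z. p (p x y) z = p x (p y z)) \<and>
     (\<forall>x y z. r (r x y) z = r x (r y z)) \<and>
     (\<forall>a b c x y z. x \<in> V a \<longrightarrow> y \<in> V b \<longrightarrow> z \<in> V c \<longrightarrow>
        l (l x y) z = l x (r y z) \<and> l x (r y z) = l x (p y z) \<and>
        l (r x y) z = r x (l y z) \<and>
        r (l x y) z = r x (r y z) \<and> r x (r y z) = r (p x y) z \<and>
        l (p x y) z = p x (l y z) \<and>
        p (l x y) z = p x (r y z) \<and>
        p (r x y) z = r x (p y z))"

definition ternary_leibniz_color ::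
  "('k::field \<Rightarrow> 'v::ab_group_add \<Rightarrow> 'v) \<Rightarrow> ('g::ab_group_add \<Rightarrow> 'v set) \<Rightarrow> ('g \<Rightarrow> 'g \<Rightarrow> 'k)
   \<Rightarrow> ('v \<Rightarrow> 'v \<Rightarrow> 'v \<Rightarrow> 'v) \<Rightarrow> bool" where
  "ternary_leibniz_color scale V eps T \<longleftrightarrow>
     graded_space scale V \<and> skew_bicharacter eps \<and> even_trilinear scale V T \<and>
     (\<forall>a b c d e x y z t u. x \<in> V a \<longrightarrow> y \<in> V b \<longrightarrow> z \<in> V c \<longrightarrow> t \<in> V d \<longrightarrow> u \<in> V e \<longrightarrow>
        T (T x y z) t u =
          T x y (T z t u) + scale (eps c (d + e)) (T x (T y t u) z)
          + scale (eps (b + c) (d + e)) (T (T x t u) y z))"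

text \<open>The bracket on homogeneous elements \<open>x \<in> V a, y \<in> V b, z \<in> V c\<close>:
  \<open>x \<dashv> (y \<perp> z - \<epsilon>(b,c) z \<perp> y) - \<epsilon>(a,b+c) (y \<perp> z - \<epsilon>(b,c) z \<perp> y) \<turnstile> x\<close>.\<close>

definition trialg_bracket ::
  "('k::field \<Rightarrow> 'v::ab_group_add \<Rightarrow> 'v) \<Rightarrow> ('g::ab_group_add \<Rightarrow> 'g \<Rightarrow> 'k)
   \<Rightarrow> ('v \<Rightarrow> 'v \<Rightarrow> 'v) \<Rightarrow> ('v \<Rightarrow> 'v \<Rightarrow> 'v) \<Rightarrow> ('v \<Rightarrow> 'v \<Rightarrow> 'v)
   \<Rightarrow> 'g \<Rightarrow> 'g \<Rightarrow> 'g \<Rightarrow> 'v \<Rightarrow> 'v \<Rightarrow> 'v \<Rightarrow> 'v" where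
  "trialg_bracket scale eps l p r a b c x y z =
     (let w = p y z - scale (eps b c) (p z y)
      in l x w - scale (eps a (b + c)) (r w x))"

end

theory Submission
  imports Defs
begin

locale ctri =
  fixes scale :: "'k::field \<Rightarrow> 'v::ab_group_add \<Rightarrow> 'v"
    and V :: "'g::ab_group_add \<Rightarrow> 'v set"
    and eps :: "'g \<Rightarrow> 'g \<Rightarrow> 'k"
    and l p r :: "'v \<Rightarrow> 'v \<Rightarrow> 'v"
  assumes tri: "assoc_color_trialgebra scale V eps l p r"
begin

lemma gs: "graded_space scale V" using tri unfolding assoc_color_trialgebra_def by blast
lemma md: "module scale" using gs unfolding graded_space_def by blast
lemma sk: "skew_bicharacter eps" using tri unfolding assoc_color_trialgebra_def by blast
lemma bl: "even_bilinear scale V l" "even_bilinear scale V p" "even_bilinear scale V r"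
  using tri unfolding assoc_color_trialgebra_def by blast+

end

sublocale ctri \<subseteq> M: module scale by (rule md)

context ctri begin

lemma sub: "M.subspace (V g)" using gs unfolding graded_space_def by blast

lemma V0: "0 \<in> V g" by (rule M.subspace_0[OF sub])
lemma Vadd: "x \<in> V g \<Longrightarrow> y \<in> V g \<Longrightarrow> x + y \<in> V g" by (rule M.subspace_add[OF sub])
lemma Vdiff: "x \<in> V g \<Longrightarrow> y \<in> V g \<Longrightarrow> x - y \<in> V g" by (rule M.subspace_diff[OF sub])
lemma Vscale: "x \<in> V g \<Longrightarrow> scale k x \<in> V g" by (rule M.subspace_scale[OF sub])

lemma eps_nz: "eps x y \<noteq> 0" using sk unfolding skew_bicharacter_def by blast
lemma eps_add1: "eps (x + y) z = eps x z * eps y z" using sk unfolding skew_bicharacter_def by blast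
lemma eps_add2: "eps x (y + z) = eps x y * eps x z" using sk unfolding skew_bicharacter_def by blast
lemma eps_sw: "eps y x = inverse (eps x y)"
proof -
  have "eps x y * eps y x = 1" using sk unfolding skew_bicharacter_def by blast
  then show ?thesis using eps_nz by (simp add: field_simps)
qed

definition ops where "ops = {l, p, r}"

lemma bil:
  assumes "f \<in> ops"
  shows "f (x + y) z = f x z + f y z" "f x (y + z) = f x y + f x z"
    "f (scale k x) y = scale k (f x y)" "f x (scale k y) = scale k (f x y)"
    "x \<in> V a \<Longrightarrow> y \<in> V b \<Longrightarrow> f x y \<in> V (a + b)"
  using assms bl unfolding ops_def even_bilinear_def by auto

lemma bil2:
  assumes "f \<in> ops"
  shows "f 0 y = 0" "f x 0 = 0" "f (- x) y = - f x y" "f x (- y) = - f x y"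
    "f (x - x') y = f x y - f x' y" "f x (y - y') = f x y - f x y'"
proof -
  interpret a1: additive "\<lambda>x. f x y" by unfold_locales (rule bil(1)[OF assms])
  interpret a2: additive "\<lambda>y. f x y" by unfold_locales (rule bil(2)[OF assms])
  show "f 0 y = 0" "f (- x) y = - f x y" "f (x - x') y = f x y - f x' y"
    using a1.zero a1.minus a1.diff by auto
  show "f x 0 = 0" "f x (- y) = - f x y" "f x (y - y') = f x y - f x y'"
    using a2.zero a2.minus a2.diff by auto
qed

lemma ops: "l \<in> ops" "p \<in> ops" "r \<in> ops" by (auto simp: ops_def)

lemma ax:
  assumes "x \<in> V a" "y \<in> V b" "z \<in> V c"
  shows "l (l x y) z = l x (r y z)" "l x (r y z) = l x (p y z)"
        "l (r x y) z = r x (l y z)"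
        "r (l x y) z = r x (r y z)" "r x (r y z) = r (p x y) z"
        "l (p x y) z = p x (l y z)"
        "p (l x y) z = p x (r y z)"
        "p (r x y) z = r x (p y z)"
  using tri assms unfolding assoc_color_trialgebra_def by blast+

lemma assoc: "l (l x y) z = l x (l y z)" "p (p x y) z = p x (p y z)" "r (r x y) z = r x (r y z)"
  using tri unfolding assoc_color_trialgebra_def by blast+

definition hom where "hom x \<longleftrightarrow> (\<exists>g. x \<in> V g)"

lemma hom_op: "f \<in> ops \<Longrightarrow> hom x \<Longrightarrow> hom y \<Longrightarrow> hom (f x y)"
  unfolding hom_def using bil(5) by blast

lemma lo: "f \<in> ops \<Longrightarrow> hom x \<Longrightarrow> hom u \<Longrightarrow> hom v \<Longrightarrow> l x (f u v) = l (l x u) v"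
  unfolding hom_def ops_def using ax(1,2)[of x _ u _ v] assoc(1)[of x u v] by auto

lemma ro: "f \<in> ops \<Longrightarrow> hom x \<Longrightarrow> hom u \<Longrightarrow> hom v \<Longrightarrow> r (f u v) x = r u (r v x)"
  unfolding hom_def ops_def using ax(4,5)[of u _ v _ x] assoc(3)[of u v x] by auto


lemmas lin = bil(1-4)[OF ops(1)] bil(1-4)[OF ops(2)] bil(1-4)[OF ops(3)]
   bil2[OF ops(1)] bil2[OF ops(2)] bil2[OF ops(3)]

lemma refl6:
  assumes Q: "Q = (\<lambda>c1 c2 c3 c4 c5 c6. scale c1 P1 + scale c2 P2 + scale c3 P3 + scale c4 P4 + scale c5 P5 + scale c6 P6)"
  shows "Q c1 c2 c3 c4 c5 c6 + Q d1 d2 d3 d4 d5 d6 = Q (c1+d1) (c2+d2) (c3+d3) (c4+d4) (c5+d5) (c6+d6)"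
    "Q c1 c2 c3 c4 c5 c6 - Q d1 d2 d3 d4 d5 d6 = Q (c1-d1) (c2-d2) (c3-d3) (c4-d4) (c5-d5) (c6-d6)"
    "- Q c1 c2 c3 c4 c5 c6 = Q (-c1) (-c2) (-c3) (-c4) (-c5) (-c6)"
    "scale k (Q c1 c2 c3 c4 c5 c6) = Q (k*c1) (k*c2) (k*c3) (k*c4) (k*c5) (k*c6)"
    "P1 = Q 1 0 0 0 0 0" "P2 = Q 0 1 0 0 0 0" "P3 = Q 0 0 1 0 0 0"
    "P4 = Q 0 0 0 1 0 0" "P5 = Q 0 0 0 0 1 0" "P6 = Q 0 0 0 0 0 1"
  unfolding Q by (simp_all add: M.scale_left_distrib M.scale_right_distrib M.scale_left_diff_distrib
     M.scale_right_diff_distrib algebra_simps)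

lemma Qcong: "c1 = d1 \<Longrightarrow> c2 = d2 \<Longrightarrow> c3 = d3 \<Longrightarrow> c4 = d4 \<Longrightarrow> c5 = d5 \<Longrightarrow> c6 = d6 \<Longrightarrow>
   Q c1 c2 c3 c4 c5 c6 = Q d1 d2 d3 d4 d5 d6" by simp

definition Lf where "Lf a g x m = l x m - scale (eps a g) (r m x)"
definition Df where "Df b c y z = p y z - scale (eps b c) (p z y)"

lemma Leib:
  assumes x: "x \<in> V a" and m: "m \<in> V u" and w: "w \<in> V v"
  shows "Lf (a+u) v (Lf a u x m) w = Lf a (u+v) x (Lf u v m w) + scale (eps u v) (Lf (a+v) u (Lf a v x w) m)"
proof -
  have e: "l x (l m w) = l (l x m) w" "l x (r w m) = l (l x w) m" "r (l m w) x = r m (r w x)"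
     "r (r w m) x = r w (r m x)" "l (r w x) m = r w (l x m)" "l (r m x) w = r m (l x w)"
    using assoc ax x m w by metis+
  define Q where "Q = (\<lambda>c1 c2 c3 c4 c5 c6. scale c1 (l (l x m) w) + scale c2 (r m (l x w)) + scale c3 (r w (l x m))
     + scale c4 (r w (r m x)) + scale c5 (l (l x w) m) + scale c6 (r m (r w x)))"
  note R = refl6[OF Q_def]
  show ?thesis unfolding Lf_def
    apply (simp only: lin e)
    apply (simp only: R)
    apply (rule Qcong)
    apply (simp_all add: eps_add1 eps_add2 eps_sw[of v u] eps_nz field_simps)
    done
qed


definition K where "K a g x u v s = l (l (l x u) v) s - scale (eps a g) (r u (r v (r s x)))"

lemma Lf_lin: "Lf a g x (m + m') = Lf a g x m + Lf a g x m'"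
  "Lf a g x (m - m') = Lf a g x m - Lf a g x m'"
  "Lf a g x (- m) = - Lf a g x m"
  "Lf a g x (scale k m) = scale k (Lf a g x m)"
  unfolding Lf_def by (simp_all add: lin M.scale_right_distrib M.scale_right_diff_distrib
     M.scale_left_commute[of k] algebra_simps)

lemma Lf_trip:
  assumes "f1 \<in> ops" "f2 \<in> ops" "hom x" "hom u" "hom v" "hom s"
  shows "Lf a g x (f1 (f2 u v) s) = K a g x u v s" "Lf a g x (f1 u (f2 v s)) = K a g x u v s"
proof -
  have h: "hom (f2 u v)" "hom (f2 v s)" "hom (r s x)" "hom (r v (r s x))"
    using assms hom_op ops by auto
  show "Lf a g x (f1 (f2 u v) s) = K a g x u v s"
    unfolding Lf_def K_def using assms h lo ro by simp
  show "Lf a g x (f1 u (f2 v s)) = K a g x u v s"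
    unfolding Lf_def K_def using assms h lo ro hom_op ops by simp
qed

lemmas trips = Lf_trip[of l l] Lf_trip[of l p] Lf_trip[of l r]
  Lf_trip[of p l] Lf_trip[of p p] Lf_trip[of p r]
  Lf_trip[of r l] Lf_trip[of r p] Lf_trip[of r r]

lemma Jac:
  assumes x: "x \<in> V a" and y: "y \<in> V b" and z: "z \<in> V c" and w: "w \<in> V n"
  shows "Lf a ((b+c)+n) x (Lf (b+c) n (Df b c y z) w) = Lf a (b+(c+n)) x (Df b (c+n) y (Lf c n z w))
     + scale (eps c n) (Lf a ((b+n)+c) x (Df (b+n) c (Lf b n y w) z))"
proof -
  define G where "G = b + c + n"
  have g: "(b+c)+n = G" "b+(c+n) = G" "(b+n)+c = G" unfolding G_def by (simp_all add: add_ac)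
  have i1: "Lf (b+c) n M w = l M w - scale (eps (b+c) n) (r w M)" for M by (simp add: Lf_def)
  have i2: "Lf c n z w = l z w - scale (eps c n) (r w z)" by (simp add: Lf_def)
  have i3: "Lf b n y w = l y w - scale (eps b n) (r w y)" by (simp add: Lf_def)
  have h: "hom x" "hom y" "hom z" "hom w" using x y z w hom_def by auto
  define Q where "Q = (\<lambda>c1 c2 c3 c4 c5 c6. scale c1 (K a G x y z w) + scale c2 (K a G x z y w)
     + scale c3 (K a G x w y z)
     + scale c4 (K a G x w z y) + scale c5 (K a G x y w z) + scale c6 (K a G x z w y))"
  note R = refl6[OF Q_def]
  show ?thesis unfolding g
    apply (simp only: i1 i2 i3 Df_def)
    apply (simp only: lin Lf_lin)
    apply (simp only: trips ops h simp_thms)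
    apply (simp only: R)
    apply (rule Qcong)
    apply (simp_all add: eps_add1 eps_add2 eps_sw[of c b] eps_sw[of n b] eps_sw[of n c] eps_nz field_simps)
    done
qed


abbreviation br where "br \<equiv> trialg_bracket scale eps l p r"

lemma br_eq: "br a b c x y z = Lf a (b+c) x (Df b c y z)"
  unfolding trialg_bracket_def Lf_def Df_def Let_def by simp

lemma Df_V: "y \<in> V b \<Longrightarrow> z \<in> V c \<Longrightarrow> Df b c y z \<in> V (b+c)"
  unfolding Df_def using bil(5)[OF ops(2)] by (metis Vdiff Vscale add.commute)

lemma Lf_V: "x \<in> V a \<Longrightarrow> m \<in> V u \<Longrightarrow> Lf a g x m \<in> V (a+u)"
  unfolding Lf_def using bil(5)[OF ops(1)] bil(5)[OF ops(3)] by (metis Vdiff Vscale add.commute)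

lemma br_V: "x \<in> V a \<Longrightarrow> y \<in> V b \<Longrightarrow> z \<in> V c \<Longrightarrow> br a b c x y z \<in> V (a+b+c)"
  unfolding br_eq by (metis Lf_V Df_V add.assoc)

lemma hLeib:
  assumes x: "x \<in> V a" and y: "y \<in> V b" and z: "z \<in> V c" and t: "t \<in> V d" and u: "u \<in> V e"
  shows "br (a+b+c) d e (br a b c x y z) t u = br a b (c+d+e) x y (br c d e z t u)
     + scale (eps c (d+e)) (br a (b+d+e) c x (br b d e y t u) z)
     + scale (eps (b+c) (d+e)) (br (a+d+e) b c (br a d e x t u) y z)"
proof -
  define n where "n = d + e"
  define w where "w = Df d e t u"
  define m where "m = Df b c y z"
  have w: "w \<in> V n" unfolding w_def n_def by (rule Df_V[OF t u])
  have m: "m \<in> V (b+c)" unfolding m_def by (rule Df_V[OF y z])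
  have g: "a+b+c = a+(b+c)" "c+d+e = c+n" "b+d+e = b+n" "a+d+e = a+n" unfolding n_def by (simp_all add: add_ac)
  have L: "Lf (a+(b+c)) n (Lf a (b+c) x m) w = Lf a ((b+c)+n) x (Lf (b+c) n m w)
      + scale (eps (b+c) n) (Lf (a+n) (b+c) (Lf a n x w) m)"
    by (rule Leib[OF x m w])
  have J: "Lf a ((b+c)+n) x (Lf (b+c) n (Df b c y z) w) = Lf a (b+(c+n)) x (Df b (c+n) y (Lf c n z w))
     + scale (eps c n) (Lf a ((b+n)+c) x (Df (b+n) c (Lf b n y w) z))"
    by (rule Jac[OF x y z w])
  show ?thesis unfolding g br_eq
    unfolding n_def[symmetric] w_def[symmetric] m_def[symmetric] L
    using J unfolding m_def[symmetric] by (simp add: add_ac)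
qed


lemma br_lin:
  "br a b c (x + x') y z = br a b c x y z + br a b c x' y z"
  "br a b c x (y + y') z = br a b c x y z + br a b c x y' z"
  "br a b c x y (z + z') = br a b c x y z + br a b c x y z'"
  "br a b c (scale k x) y z = scale k (br a b c x y z)"
  "br a b c x (scale k y) z = scale k (br a b c x y z)"
  "br a b c x y (scale k z) = scale k (br a b c x y z)"
  unfolding trialg_bracket_def Let_def
  by (simp_all add: lin M.scale_right_distrib M.scale_right_diff_distrib
     M.scale_left_commute[of k] algebra_simps)

lemma br_0: "br a b c 0 y z = 0" "br a b c x 0 z = 0" "br a b c x y 0 = 0"
  unfolding trialg_bracket_def Let_def by (simp_all add: lin)

definition cp where "cp v = (THE c. (\<forall>g. c g \<in> V g) \<and> finite {g. c g \<noteq> 0} \<and> v = (\<Sum>g\<in>{g. c g \<noteq> 0}. c g))"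
definition sp where "sp v = {g. cp v g \<noteq> 0}"

lemma cp_ex: "(\<forall>g. cp v g \<in> V g) \<and> finite {g. cp v g \<noteq> 0} \<and> v = (\<Sum>g\<in>{g. cp v g \<noteq> 0}. cp v g)"
proof -
  have "\<exists>!c. (\<forall>g. c g \<in> V g) \<and> finite {g. c g \<noteq> 0} \<and> v = (\<Sum>g\<in>{g. c g \<noteq> 0}. c g)"
    using gs unfolding graded_space_def by blast
  then show ?thesis unfolding cp_def by (rule theI')
qed

lemma cp: "cp v g \<in> V g" "finite (sp v)" "v = (\<Sum>g\<in>sp v. cp v g)"
  using cp_ex unfolding sp_def by blast+

lemma cp_uniq:
  assumes c: "\<And>g. c g \<in> V g" and S: "finite S" "{g. c g \<noteq> 0} \<subseteq> S" and v: "v = sum c S"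
  shows "cp v = c"
proof -
  have ex: "\<exists>!c. (\<forall>g. c g \<in> V g) \<and> finite {g. c g \<noteq> 0} \<and> v = (\<Sum>g\<in>{g. c g \<noteq> 0}. c g)"
    using gs unfolding graded_space_def by blast
  have fin: "finite {g. c g \<noteq> 0}" using S finite_subset by blast
  have "sum c S = (\<Sum>g\<in>{g. c g \<noteq> 0}. c g)"
    by (rule sum.mono_neutral_right[OF S(1) S(2)]) auto
  then have v2: "v = (\<Sum>g\<in>{g. c g \<noteq> 0}. c g)" using v by simp
  have P: "(\<forall>g. c g \<in> V g) \<and> finite {g. c g \<noteq> 0} \<and> v = (\<Sum>g\<in>{g. c g \<noteq> 0}. c g)"
    using c fin v2 by blast
  show ?thesis unfolding cp_def by (rule the1_equality[where a=c, OF ex P])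
qed

lemma sum_sp: assumes "finite S" "sp v \<subseteq> S" shows "(\<Sum>g\<in>S. cp v g) = v"
proof -
  have "(\<Sum>g\<in>S. cp v g) = (\<Sum>g\<in>sp v. cp v g)"
    by (rule sum.mono_neutral_right[OF assms]) (auto simp: sp_def)
  then show ?thesis using cp(3)[of v] by simp
qed

lemma cp_add: "cp (x + y) = (\<lambda>g. cp x g + cp y g)"
proof (rule cp_uniq)
  show "cp x g + cp y g \<in> V g" for g using cp(1) Vadd by blast
  show "finite (sp x \<union> sp y)" using cp(2) by blast
  show "{g. cp x g + cp y g \<noteq> 0} \<subseteq> sp x \<union> sp y" unfolding sp_def by auto
  show "x + y = (\<Sum>g\<in>sp x \<union> sp y. cp x g + cp y g)"
    using cp(2) by (simp add: sum.distrib sum_sp)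
qed

lemma cp_scale: "cp (scale k x) = (\<lambda>g. scale k (cp x g))"
proof (rule cp_uniq)
  show "scale k (cp x g) \<in> V g" for g using cp(1) Vscale by blast
  show "finite (sp x)" using cp(2) by blast
  show "{g. scale k (cp x g) \<noteq> 0} \<subseteq> sp x" unfolding sp_def by auto
  show "scale k x = (\<Sum>g\<in>sp x. scale k (cp x g))"
    using cp(2) by (simp add: M.scale_sum_right[symmetric] sum_sp)
qed

lemma cp_hom: "x \<in> V a \<Longrightarrow> cp x = (\<lambda>g. if g = a then x else 0)"
  by (rule cp_uniq[where S="{a}"]) (auto simp: V0)

definition T where "T x y z = (\<Sum>g\<in>sp x. \<Sum>h\<in>sp y. \<Sum>k\<in>sp z. br g h k (cp x g) (cp y h) (cp z k))"

lemma T_gen: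
  assumes "finite A" "finite B" "finite C" "sp x \<subseteq> A" "sp y \<subseteq> B" "sp z \<subseteq> C"
  shows "T x y z = (\<Sum>g\<in>A. \<Sum>h\<in>B. \<Sum>k\<in>C. br g h k (cp x g) (cp y h) (cp z k))"
proof -
  have 1: "(\<Sum>k\<in>C. br g h k (cp x g) (cp y h) (cp z k)) = (\<Sum>k\<in>sp z. br g h k (cp x g) (cp y h) (cp z k))" for g h
    by (rule sum.mono_neutral_right) (use assms in \<open>auto simp: sp_def br_0\<close>)
  have 2: "(\<Sum>h\<in>B. \<Sum>k\<in>sp z. br g h k (cp x g) (cp y h) (cp z k)) = (\<Sum>h\<in>sp y. \<Sum>k\<in>sp z. br g h k (cp x g) (cp y h) (cp z k))" for g
    by (rule sum.mono_neutral_right) (use assms in \<open>auto simp: sp_def br_0\<close>)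
  have 3: "(\<Sum>g\<in>A. \<Sum>h\<in>sp y. \<Sum>k\<in>sp z. br g h k (cp x g) (cp y h) (cp z k)) = T x y z"
    unfolding T_def by (rule sum.mono_neutral_right) (use assms in \<open>auto simp: sp_def br_0\<close>)
  show ?thesis using 1 2 3 by simp
qed

lemma T_hom: "x \<in> V a \<Longrightarrow> y \<in> V b \<Longrightarrow> z \<in> V c \<Longrightarrow> T x y z = br a b c x y z"
  by (subst T_gen[where A="{a}" and B="{b}" and C="{c}"]) (auto simp: sp_def cp_hom)

lemma spf: "finite (sp x)" by (rule cp(2))

lemma T_add1: "T (x + x') y z = T x y z + T x' y z"
proof -
  let ?A = "sp x \<union> sp x' \<union> sp (x+x')"
  have f: "finite ?A" using spf by blast
  have "T (x + x') y z = (\<Sum>g\<in>?A. \<Sum>h\<in>sp y. \<Sum>k\<in>sp z. br g h k (cp (x+x') g) (cp y h) (cp z k))"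
    by (rule T_gen) (use f spf in auto)
  also have "\<dots> = (\<Sum>g\<in>?A. \<Sum>h\<in>sp y. \<Sum>k\<in>sp z. br g h k (cp x g) (cp y h) (cp z k))
     + (\<Sum>g\<in>?A. \<Sum>h\<in>sp y. \<Sum>k\<in>sp z. br g h k (cp x' g) (cp y h) (cp z k))"
    unfolding cp_add br_lin sum.distrib ..
  also have "\<dots> = T x y z + T x' y z"
    by (subst (1 2) T_gen[symmetric]) (use f spf in auto)
  finally show ?thesis .
qed

lemma T_add2: "T x (y + y') z = T x y z + T x y' z"
proof -
  let ?A = "sp y \<union> sp y' \<union> sp (y+y')"
  have f: "finite ?A" using spf by blast
  have "T x (y + y') z = (\<Sum>g\<in>sp x. \<Sum>h\<in>?A. \<Sum>k\<in>sp z. br g h k (cp x g) (cp (y+y') h) (cp z k))"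
    by (rule T_gen) (use f spf in auto)
  also have "\<dots> = (\<Sum>g\<in>sp x. \<Sum>h\<in>?A. \<Sum>k\<in>sp z. br g h k (cp x g) (cp y h) (cp z k))
     + (\<Sum>g\<in>sp x. \<Sum>h\<in>?A. \<Sum>k\<in>sp z. br g h k (cp x g) (cp y' h) (cp z k))"
    unfolding cp_add br_lin sum.distrib ..
  also have "\<dots> = T x y z + T x y' z"
    by (subst (1 2) T_gen[symmetric]) (use f spf in auto)
  finally show ?thesis .
qed

lemma T_add3: "T x y (z + z') = T x y z + T x y z'"
proof -
  let ?A = "sp z \<union> sp z' \<union> sp (z+z')"
  have f: "finite ?A" using spf by blast
  have "T x y (z + z') = (\<Sum>g\<in>sp x. \<Sum>h\<in>sp y. \<Sum>k\<in>?A. br g h k (cp x g) (cp y h) (cp (z+z') k))"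
    by (rule T_gen) (use f spf in auto)
  also have "\<dots> = (\<Sum>g\<in>sp x. \<Sum>h\<in>sp y. \<Sum>k\<in>?A. br g h k (cp x g) (cp y h) (cp z k))
     + (\<Sum>g\<in>sp x. \<Sum>h\<in>sp y. \<Sum>k\<in>?A. br g h k (cp x g) (cp y h) (cp z' k))"
    unfolding cp_add br_lin sum.distrib ..
  also have "\<dots> = T x y z + T x y z'"
    by (subst (1 2) T_gen[symmetric]) (use f spf in auto)
  finally show ?thesis .
qed

lemma T_sc1: "T (scale k x) y z = scale k (T x y z)"
proof -
  let ?A = "sp x \<union> sp (scale k x)"
  have f: "finite ?A" using spf by blast
  have "T (scale k x) y z = (\<Sum>g\<in>?A. \<Sum>h\<in>sp y. \<Sum>k'\<in>sp z. br g h k' (cp (scale k x) g) (cp y h) (cp z k'))"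
    by (rule T_gen) (use f spf in auto)
  also have "\<dots> = scale k (\<Sum>g\<in>?A. \<Sum>h\<in>sp y. \<Sum>k'\<in>sp z. br g h k' (cp x g) (cp y h) (cp z k'))"
    unfolding cp_scale br_lin M.scale_sum_right ..
  also have "\<dots> = scale k (T x y z)"
    by (subst T_gen[symmetric]) (use f spf in auto)
  finally show ?thesis .
qed

lemma T_sc2: "T x (scale k y) z = scale k (T x y z)"
proof -
  let ?A = "sp y \<union> sp (scale k y)"
  have f: "finite ?A" using spf by blast
  have "T x (scale k y) z = (\<Sum>g\<in>sp x. \<Sum>h\<in>?A. \<Sum>k'\<in>sp z. br g h k' (cp x g) (cp (scale k y) h) (cp z k'))"
    by (rule T_gen) (use f spf in auto)
  also have "\<dots> = scale k (\<Sum>g\<in>sp x. \<Sum>h\<in>?A. \<Sum>k'\<in>sp z. br g h k' (cp x g) (cp y h) (cp z k'))"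
    unfolding cp_scale br_lin M.scale_sum_right ..
  also have "\<dots> = scale k (T x y z)"
    by (subst T_gen[symmetric]) (use f spf in auto)
  finally show ?thesis .
qed

lemma T_sc3: "T x y (scale k z) = scale k (T x y z)"
proof -
  let ?A = "sp z \<union> sp (scale k z)"
  have f: "finite ?A" using spf by blast
  have "T x y (scale k z) = (\<Sum>g\<in>sp x. \<Sum>h\<in>sp y. \<Sum>k'\<in>?A. br g h k' (cp x g) (cp y h) (cp (scale k z) k'))"
    by (rule T_gen) (use f spf in auto)
  also have "\<dots> = scale k (\<Sum>g\<in>sp x. \<Sum>h\<in>sp y. \<Sum>k'\<in>?A. br g h k' (cp x g) (cp y h) (cp z k'))"
    unfolding cp_scale br_lin M.scale_sum_right ..
  also have "\<dots> = scale k (T x y z)"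
    by (subst T_gen[symmetric]) (use f spf in auto)
  finally show ?thesis .
qed

lemma T_tri: "even_trilinear scale V T"
  unfolding even_trilinear_def
  using T_add1 T_add2 T_add3 T_sc1 T_sc2 T_sc3 T_hom br_V by simp

lemma T_leib: "ternary_leibniz_color scale V eps T"
  unfolding ternary_leibniz_color_def
proof (intro conjI allI impI)
  show "graded_space scale V" by (rule gs)
  show "skew_bicharacter eps" by (rule sk)
  show "even_trilinear scale V T" by (rule T_tri)
  fix a b c d e x y z t u
  assume h: "x \<in> V a" "y \<in> V b" "z \<in> V c" "t \<in> V d" "u \<in> V e"
  have v: "T x y z \<in> V (a+b+c)" "T z t u \<in> V (c+d+e)" "T y t u \<in> V (b+d+e)" "T x t u \<in> V (a+d+e)"
    using h by (simp_all add: T_hom br_V)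
  show "T (T x y z) t u = T x y (T z t u) + scale (eps c (d + e)) (T x (T y t u) z) +
          scale (eps (b + c) (d + e)) (T (T x t u) y z)"
    unfolding T_hom[OF v(1) h(4,5)] T_hom[OF h(1,2) v(2)] T_hom[OF h(1) v(3) h(3)] T_hom[OF v(4) h(2,3)]
    unfolding T_hom[OF h(1,2,3)] T_hom[OF h(3,4,5)] T_hom[OF h(2,4,5)] T_hom[OF h(1,4,5)]
    by (rule hLeib[OF h])
qed

end

theorem mainTheorem10:
  fixes scale :: "'k::field \<Rightarrow> 'v::ab_group_add \<Rightarrow> 'v"
    and V :: "'g::ab_group_add \<Rightarrow> 'v set"
    and eps :: "'g \<Rightarrow> 'g \<Rightarrow> 'k"
    and l p r :: "'v \<Rightarrow> 'v \<Rightarrow> 'v"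
  assumes char: "(2::'k) \<noteq> 0"
    and tri: "assoc_color_trialgebra scale V eps l p r"
  shows "\<exists>T. ternary_leibniz_color scale V eps T \<and>
           (\<forall>a b c x y z. x \<in> V a \<longrightarrow> y \<in> V b \<longrightarrow> z \<in> V c \<longrightarrow>
              T x y z = trialg_bracket scale eps l p r a b c x y z)"
proof -
  interpret ctri scale V eps l p r by (rule ctri.intro[OF tri])
  show ?thesis using T_leib T_hom by blast
qed

end
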